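(* Let $c$ be a prompt, $x_0$ a clean image in $\mathbb{R}^d$, $\epsilon\in\mathbb{R}^d$ a noise vector, $t\in[0,1]$, and $x_t=(1-t)x_0+t\epsilon$; let $v = \epsilon - x_0$ be the forward-process velocity target. Let $v_\theta(x_t,t,c)$ and $v_{\mathrm{old}}(x_t,t,c)$ be the trainable and rollout velocity predictions, with corresponding clean-image predictions $f_\theta = x_t - t\,v_\theta$ and $f_{\mathrm{old}} = x_t - t\,v_{\mathrm{old}}$. Let $r=r(x_0,c)\in[0,1]$ be a normalized optimality score, $A = A(x_0,c) = 2r-1$, and $\beta>0$. Define the DiffusionNFT branches $v_\theta^+ = (1-\beta)v_{\mathrm{old}} + \beta v_\theta$ and $v_\theta^- = (1+\beta)v_{\mathrm{old}} - \beta v_\theta$ and the branch loss \[ \ell_{\mathrm{NFT}} = r\,\|v_\theta^+ - v\|^2 + (1-r)\,\|v_\theta^- - v\|^2. \] Then the prediction-space version $t^2\,\ell_{\mathrm{NFT}}$ of this loss equals, up to a term independent of $\theta$, \[ \beta A(x_0,c)\,\|x_0 - f_\theta(x_t,t,c)\|^2 + \beta\bigl(\beta - A(x_0,c)\bigr)\,\|f_\theta(x_t,t,c) - f_{\mathrm{old}}(x_t,t,c)\|^2 . \] That is, it is the AdvantageFlow per-sample loss with reference regularization strength $\lambda = 0$ and rollout regularization strength chosen as $\gamma_{\mathrm{NFT}}(A) = \beta(\beta - A(x_0,c))$ (with the advantage-weighted term scaled by $\beta$).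
   Context: The AdvantageFlow per-sample loss is $A(x_0,c)\|f_\theta(x_t,t,c)-x_0\|^2 + \gamma\|f_\theta(x_t,t,c)-f_{\mathrm{old}}(x_t,t,c)\|^2 + \lambda\|f_\theta(x_t,t,c)-f_{\mathrm{ref}}(x_t,t,c)\|^2$, where $f_{\mathrm{ref}}$ is a fixed reference predictor and $\gamma,\lambda\ge 0$ are regularization strengths. The passage from velocity losses to prediction losses multiplies by $t^2$, using $t^2\|v_\theta - v\|^2 = \|x_0 - f_\theta\|^2$ and $t^2\|v_\theta - v_{\mathrm{old}}\|^2 = \|f_\theta - f_{\mathrm{old}}\|^2$. $\|\cdot\|$ is the Euclidean norm. *)

theory Defs
  imports "HOL-Analysis.Analysis"
begin

definition xt :: "real ^ 'd \<Rightarrow> real ^ 'd \<Rightarrow> real \<Rightarrow> real ^ 'd" where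
  "xt x0 eps t = (1 - t) *\<^sub>R x0 + t *\<^sub>R eps"

definition pred_from_vel :: "real ^ 'd \<Rightarrow> real \<Rightarrow> real ^ 'd \<Rightarrow> real ^ 'd" where
  "pred_from_vel x t v = x - t *\<^sub>R v"

definition nft_loss :: "real \<Rightarrow> real \<Rightarrow> real ^ 'd \<Rightarrow> real ^ 'd \<Rightarrow> real ^ 'd \<Rightarrow> real" where
  "nft_loss r \<beta> vth vold v =
     r * (norm (((1 - \<beta>) *\<^sub>R vold + \<beta> *\<^sub>R vth) - v))\<^sup>2
     + (1 - r) * (norm (((1 + \<beta>) *\<^sub>R vold - \<beta> *\<^sub>R vth) - v))\<^sup>2"

definition advflow_loss :: "real \<Rightarrow> real \<Rightarrow> real \<Rightarrow> real ^ 'd \<Rightarrow> real ^ 'd \<Rightarrow> real ^ 'd \<Rightarrow> real ^ 'd \<Rightarrow> real" where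
  "advflow_loss A \<gamma> lam x0 fth fo fref =
     A * (norm (fth - x0))\<^sup>2 + \<gamma> * (norm (fth - fo))\<^sup>2 + lam * (norm (fth - fref))\<^sup>2"

end

theory Submission
  imports Defs
begin

lemma key:
  fixes a vo v x0 fr :: "real ^ 'd" and t \<beta> A r :: real
  assumes "A = 2*r - 1" and X: "X = x0 + t *\<^sub>R v"
  shows "t\<^sup>2 * nft_loss r \<beta> a vo v
    = \<beta> * advflow_loss A (\<beta> - A) 0 x0 (pred_from_vel X t a)
          (pred_from_vel X t vo) fr
      + t\<^sup>2 * (1 - \<beta> * A) * (norm (vo - v))\<^sup>2"
proof -
  define u where "u = a - vo"
  define w where "w = vo - v"
  have a: "a = u + vo" and v: "v = vo - w" by (simp_all add: u_def w_def)
  have e1: "(norm (w + \<beta> *\<^sub>R u))\<^sup>2 = (norm w)\<^sup>2 + 2*\<beta>*(u \<bullet> w) + \<beta>\<^sup>2 * (norm u)\<^sup>2"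
    apply (simp only: power2_norm_eq_inner)
    by (simp add: inner_add_left inner_add_right inner_commute[of w u] power2_eq_square algebra_simps)
  have e2: "(norm (w - \<beta> *\<^sub>R u))\<^sup>2 = (norm w)\<^sup>2 - 2*\<beta>*(u \<bullet> w) + \<beta>\<^sup>2 * (norm u)\<^sup>2"
    apply (simp only: power2_norm_eq_inner)
    by (simp add: inner_diff_left inner_diff_right inner_commute[of w u] power2_eq_square algebra_simps)
  have e3: "(norm (u + w))\<^sup>2 = (norm w)\<^sup>2 + 2*(u \<bullet> w) + (norm u)\<^sup>2"
    apply (simp only: power2_norm_eq_inner)
    by (simp add: inner_add_left inner_add_right inner_commute[of w u] power2_eq_square algebra_simps)
  have p1: "((1 - \<beta>) *\<^sub>R vo + \<beta> *\<^sub>R (u + vo)) - (vo - w) = w + \<beta> *\<^sub>R u"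
    by (simp add: algebra_simps)
  have p2: "((1 + \<beta>) *\<^sub>R vo - \<beta> *\<^sub>R (u + vo)) - (vo - w) = w - \<beta> *\<^sub>R u"
    by (simp add: algebra_simps)
  have p3: "norm (x0 + t *\<^sub>R (vo - w) - t *\<^sub>R (u + vo) - x0) = \<bar>t\<bar> * norm (u + w)"
  proof -
    have "x0 + t *\<^sub>R (vo - w) - t *\<^sub>R (u + vo) - x0 = - (t *\<^sub>R (u + w))"
      by (simp add: algebra_simps)
    then show ?thesis by simp
  qed
  have p4: "norm (x0 + t *\<^sub>R (vo - w) - t *\<^sub>R (u + vo) - (x0 + t *\<^sub>R (vo - w) - t *\<^sub>R vo)) = \<bar>t\<bar> * norm u"
  proof -
    have "x0 + t *\<^sub>R (vo - w) - t *\<^sub>R (u + vo) - (x0 + t *\<^sub>R (vo - w) - t *\<^sub>R vo) = - (t *\<^sub>R u)"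
      by (simp add: algebra_simps)
    then show ?thesis by simp
  qed
  have w: "vo - (vo - w) = w" by simp
  show ?thesis
    unfolding nft_loss_def advflow_loss_def pred_from_vel_def X a v assms(1) p1 p2 p3 p4 w
    unfolding power_mult_distrib e1 e2 e3 power2_abs
    by (simp add: algebra_simps power2_eq_square)
qed

theorem proposition3:
  fixes x0 eps :: "real ^ 'd" and c :: 'c and t \<beta> :: real
    and r :: "real ^ 'd \<Rightarrow> 'c \<Rightarrow> real"
    and v_\<theta> :: "'p \<Rightarrow> real ^ 'd \<Rightarrow> real \<Rightarrow> 'c \<Rightarrow> real ^ 'd"
    and v_old :: "real ^ 'd \<Rightarrow> real \<Rightarrow> 'c \<Rightarrow> real ^ 'd"
    and f_ref :: "real ^ 'd \<Rightarrow> real \<Rightarrow> 'c \<Rightarrow> real ^ 'd"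
  assumes "0 \<le> t" "t \<le> 1"
    and "0 \<le> r x0 c" "r x0 c \<le> 1"
    and "\<beta> > 0"
  shows "\<exists>K::real. \<forall>\<theta>.
    t\<^sup>2 * nft_loss (r x0 c) \<beta> (v_\<theta> \<theta> (xt x0 eps t) t c) (v_old (xt x0 eps t) t c) (eps - x0)
    = \<beta> * advflow_loss (2 * r x0 c - 1) (\<beta> - (2 * r x0 c - 1)) 0 x0
          (pred_from_vel (xt x0 eps t) t (v_\<theta> \<theta> (xt x0 eps t) t c))
          (pred_from_vel (xt x0 eps t) t (v_old (xt x0 eps t) t c))
          (f_ref (xt x0 eps t) t c)
      + K"
proof -
  have x: "xt x0 eps t = x0 + t *\<^sub>R (eps - x0)"
    by (simp add: xt_def algebra_simps)
  show ?thesis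
    apply (rule exI[of _ "t\<^sup>2 * (1 - \<beta> * (2 * r x0 c - 1)) * (norm (v_old (xt x0 eps t) t c - (eps - x0)))\<^sup>2"])
    apply (intro allI)
    apply (rule key)
    apply simp
    apply (rule x)
    done
qed

end
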